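(* Let $\alpha\in(0,1)$, $a,b\in\mathbb{R}$, $\tau>0$, and $Q(s)=s^\alpha-a-b e^{-s\tau}$ (principal branch of $s^\alpha$). There is no $s\in\mathbb{C}\setminus\{0\}$ (in the domain of $Q$) with $Q(s)=Q'(s)=Q''(s)=Q'''(s)=0$.
   Context: $s^\alpha=|s|^\alpha e^{i\alpha\arg s}$ with $\arg s\in(-\pi,\pi)$; derivatives are complex derivatives in $s$. *)

theory Defs
  imports "HOL-Analysis.Analysis"
begin

text \<open>Q(s) = s^alpha - a - b e^(-s tau), with the principal branch s powr alpha
  (= exp(alpha * Ln s)); holomorphic on the slit plane UNIV - nonpos_Reals.\<close>
definition Qfun :: "real \<Rightarrow> real \<Rightarrow> real \<Rightarrow> real \<Rightarrow> complex \<Rightarrow> complex" where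
  "Qfun \<alpha> a b \<tau> s = s powr (complex_of_real \<alpha>) - complex_of_real a
     - complex_of_real b * exp (- s * complex_of_real \<tau>)"

end

theory Submission
  imports Defs
begin

lemma deriv_eq_on_open:
  fixes f g :: "complex \<Rightarrow> complex"
  assumes "open S" "s \<in> S" "\<And>z. z \<in> S \<Longrightarrow> f z = g z"
  shows "deriv f s = deriv g s"
proof (rule deriv_cong_ev)
  show "\<forall>\<^sub>F x in nhds s. f x = g x"
    unfolding eventually_nhds using assms by blast
qed simp

lemma dcomb:
  fixes z C c D T :: complex
  assumes "z \<notin> \<real>\<^sub>\<le>\<^sub>0"
  shows "((\<lambda>z. C * z powr c + D * exp (- z * T)) has_field_derivative
          (C*c) * z powr (c-1) + (-D*T) * exp (- z * T)) (at z)"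
proof -
  have p: "((\<lambda>z. z powr c) has_field_derivative c * z powr (c-1)) (at z)"
    by (rule has_field_derivative_powr[OF assms])
  have e: "((\<lambda>z. exp (- z * T)) has_field_derivative exp (- z * T) * (- T)) (at z)"
    by (auto intro!: derivative_eq_intros)
  show ?thesis
    using DERIV_add[OF DERIV_cmult[OF p, of C] DERIV_cmult[OF e, of D]]
    by (simp add: algebra_simps)
qed

lemma alg3:
  fixes A B T P s X :: complex
  shows "(1*A*(A-1)*(A-1-1)) * (P/s/s/s) + (-(-(-(-B)*T)*T)*T) * X = (A-1)*(A-2)*(A*P/s)/s/s + T*T*(T*(B*X))"
  by (simp add: divide_inverse algebra_simps)
lemma alg3b:
  fixes A B T P s X :: complex
  shows "(1*A*(A-1)) * (P/s/s) + (-(-(-B)*T)*T) * X = (A-1)*(A*P/s)/s - T*(T*(B*X))"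
  by (simp add: divide_inverse algebra_simps)
lemma alg3c:
  fixes A B T P s X :: complex
  shows "(1*A) * (P/s) + (-(-B)*T) * X = (A*P/s) + T*(B*X)"
  by (simp add: divide_inverse algebra_simps)

lemma alg1:
  fixes A T s u :: complex
  assumes "s \<noteq> 0" "u \<noteq> 0" "(A - 1) * u / s - T * (- u) = 0"
  shows "(A - 1) + T * s = 0"
proof -
  have "((A - 1) + T * s) * u / s = (A - 1) * u / s - T * (- u)" using assms(1) by (simp add: field_simps)
  hence "((A - 1) + T * s) * u / s = 0" using assms(3) by simp
  thus ?thesis using assms(1,2) by simp
qed

lemma alg2:
  fixes A T s u :: complex
  assumes "s \<noteq> 0" "u \<noteq> 0" "(A - 1) * (A - 2) * u / s / s + T * T * (- u) = 0"
  shows "(A - 1) * (A - 2) = T * T * s * s"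
proof -
  have "((A - 1) * (A - 2) - T * T * s * s) * u / s / s = (A - 1) * (A - 2) * u / s / s + T * T * (- u)"
    using assms(1) by (simp add: field_simps)
  hence "((A - 1) * (A - 2) - T * T * s * s) * u / s / s = 0" using assms(3) by simp
  thus ?thesis using assms(1,2) by simp
qed

theorem lemma3p1:
  fixes \<alpha> a b \<tau> :: real
  assumes "0 < \<alpha>" and "\<alpha> < 1" and "0 < \<tau>"
  shows "\<not> (\<exists>s. s \<noteq> 0 \<and> s \<notin> \<real>\<^sub>\<le>\<^sub>0 \<and>
            Qfun \<alpha> a b \<tau> s = 0 \<and>
            deriv (Qfun \<alpha> a b \<tau>) s = 0 \<and>
            (deriv ^^ 2) (Qfun \<alpha> a b \<tau>) s = 0 \<and>
            (deriv ^^ 3) (Qfun \<alpha> a b \<tau>) s = 0)"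
proof
  assume "\<exists>s. s \<noteq> 0 \<and> s \<notin> \<real>\<^sub>\<le>\<^sub>0 \<and>
            Qfun \<alpha> a b \<tau> s = 0 \<and>
            deriv (Qfun \<alpha> a b \<tau>) s = 0 \<and>
            (deriv ^^ 2) (Qfun \<alpha> a b \<tau>) s = 0 \<and>
            (deriv ^^ 3) (Qfun \<alpha> a b \<tau>) s = 0"
  then obtain s where s0: "s \<noteq> 0" and sS: "s \<notin> \<real>\<^sub>\<le>\<^sub>0"
    and h1: "deriv (Qfun \<alpha> a b \<tau>) s = 0"
    and h2: "(deriv ^^ 2) (Qfun \<alpha> a b \<tau>) s = 0"
    and h3: "(deriv ^^ 3) (Qfun \<alpha> a b \<tau>) s = 0" by blast
  define S :: "complex set" where "S = - \<real>\<^sub>\<le>\<^sub>0"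
  have oS: "open S" unfolding S_def by (simp add: open_Compl)
  have sinS: "s \<in> S" using sS S_def by simp
  define A where "A = complex_of_real \<alpha>"
  define T where "T = complex_of_real \<tau>"
  define B where "B = complex_of_real b"
  define d0 where "d0 = (\<lambda>z. 1 * z powr A + (- B) * exp (- z * T))"
  define d1 where "d1 = (\<lambda>z. (1 * A) * z powr (A - 1) + (- (- B) * T) * exp (- z * T))"
  define d2 where "d2 = (\<lambda>z. (1 * A * (A - 1)) * z powr (A - 1 - 1) + (- (- (- B) * T) * T) * exp (- z * T))"
  define d3 where "d3 = (\<lambda>z. (1 * A * (A - 1) * (A - 1 - 1)) * z powr (A - 1 - 1 - 1) + (- (- (- (- B) * T) * T) * T) * exp (- z * T))"
  have Qeq: "Qfun \<alpha> a b \<tau> = (\<lambda>z. d0 z + (- complex_of_real a))"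
    unfolding Qfun_def d0_def A_def T_def B_def by (auto simp: algebra_simps)
  have e1: "deriv (Qfun \<alpha> a b \<tau>) z = d1 z" if "z \<in> S" for z
  proof (rule DERIV_imp_deriv)
    have zz: "z \<notin> \<real>\<^sub>\<le>\<^sub>0" using that S_def by simp
    have "(d0 has_field_derivative d1 z) (at z)"
      unfolding d0_def d1_def by (rule dcomb[OF zz])
    from DERIV_add[OF this DERIV_const[of "- complex_of_real a" "at z"]]
    show "(Qfun \<alpha> a b \<tau> has_field_derivative d1 z) (at z)"
      unfolding Qeq by simp
  qed
  have e2: "deriv d1 z = d2 z" if "z \<in> S" for z
  proof (rule DERIV_imp_deriv)
    have zz: "z \<notin> \<real>\<^sub>\<le>\<^sub>0" using that S_def by simp
    show "(d1 has_field_derivative d2 z) (at z)"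
      unfolding d1_def d2_def by (rule dcomb[OF zz])
  qed
  have e3: "deriv d2 z = d3 z" if "z \<in> S" for z
  proof (rule DERIV_imp_deriv)
    have zz: "z \<notin> \<real>\<^sub>\<le>\<^sub>0" using that S_def by simp
    show "(d2 has_field_derivative d3 z) (at z)"
      unfolding d2_def d3_def by (rule dcomb[OF zz])
  qed
  have f1: "d1 s = 0" using h1 e1[OF sinS] by simp
  have dd: "deriv (deriv (Qfun \<alpha> a b \<tau>)) z = d2 z" if "z \<in> S" for z
    using deriv_eq_on_open[OF oS that e1] e2[OF that] by simp
  have f2: "d2 s = 0" using h2 dd[OF sinS] by (simp add: numeral_2_eq_2)
  have f3: "d3 s = 0"
    using h3 deriv_eq_on_open[OF oS sinS dd] e3[OF sinS] by (simp add: numeral_3_eq_3)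
  define P where "P = s powr A"
  define E where "E = B * exp (- s * T)"
  have P0: "P \<noteq> 0" unfolding P_def powr_def using s0 by simp
  have p1: "s powr (A - 1) = P / s" unfolding P_def by (simp only: powr_diff powr_to_1)
  have p2: "s powr (A - 1 - 1) = P / s / s" unfolding P_def by (simp only: powr_diff powr_to_1)
  have p3: "s powr (A - 1 - 1 - 1) = P / s / s / s" unfolding P_def by (simp only: powr_diff powr_to_1)
  define u where "u = A * P / s"
  have A0: "A \<noteq> 0" using assms(1) A_def by simp
  have A1: "A \<noteq> 1" using assms(2) A_def by simp
  have T0: "T \<noteq> 0" using assms(3) T_def by simp
  have u0: "u \<noteq> 0" using A0 P0 s0 u_def by simp
  have g1': "u + T * E = 0" using f1 unfolding d1_def u_def E_def p1 alg3c .
  have g1: "T * E = - u" using g1' by (simp add: eq_neg_iff_add_eq_0 add.commute)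
  have g2: "(A - 1) * u / s - T * (T * E) = 0" using f2 unfolding d2_def u_def E_def p2 alg3b .
  have g3: "(A - 1) * (A - 2) * u / s / s + T * T * (T * E) = 0" using f3 unfolding d3_def u_def E_def p3 alg3 .
  have g2': "(A - 1) * u / s - T * (- u) = 0" using g2 by (simp only: g1)
  have g3': "(A - 1) * (A - 2) * u / s / s + T * T * (- u) = 0" using g3 by (simp only: g1)
  have k1: "(A - 1) + T * s = 0" by (rule alg1[OF s0 u0 g2'])
  have k2: "(A - 1) * (A - 2) = T * T * s * s" by (rule alg2[OF s0 u0 g3'])
  have "T * s = 1 - A" using k1 by (simp add: algebra_simps)
  hence "(A - 1) * (A - 2) = (A - 1) * (A - 1)" using k2
    by (metis minus_diff_eq mult.assoc mult.commute mult_minus_left mult_minus_right)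
  hence "A - 2 = A - 1" using A1 by simp
  thus False by simp
qed

end
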